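(* Let $X$ be a real linear space, $T$ an infinite index set, and $f, f_t : X \to \overline{\mathbb{R}} := \mathbb{R}\cup\{\pm\infty\}$ ($t \in T$) convex proper functions. Let $h:=\sup_{t\in T} f_t$, $\Delta_1 := \operatorname{dom} f\cap\operatorname{dom} h$, and $$\sup(D_1) := \sup_{s\ge0}\inf_{x\in\Delta_1}\big(f(x)+s\,h(x)\big).$$ Let $v_1:\mathbb{R}\to\overline{\mathbb{R}}$, $v_1(r):=\inf\{f(x): h(x)\le r\}$, and let $\overline{v}_1$ be its lower semicontinuous hull, so $\overline{v}_1(0)=\min\{v_1(0),\liminf_{r\to0}v_1(r)\}$. Assume that either $\overline{v}_1(0)\neq+\infty$ or $\sup(D_1)\ne-\infty$. Then $$\sup(D_1) = \lim_{\varepsilon\downarrow0}\inf\{f(x): f_t(x)\le\varepsilon \text{ for all } t\in T\}.$$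
   Context: $\operatorname{dom} g := \{x : g(x)<+\infty\}$; a proper function never takes the value $-\infty$ and has nonempty domain. Conventions: $\inf\emptyset=+\infty$, $\sup\emptyset=-\infty$. The limit on the right exists in $\overline{\mathbb{R}}$ since the infimum is non-increasing in $\varepsilon$. *)

theory Defs
  imports "HOL-Analysis.Analysis"
begin

definition edom :: "('a \<Rightarrow> ereal) \<Rightarrow> 'a set" where
  "edom g = {x. g x < \<infinity>}"

definition proper_fun :: "('a \<Rightarrow> ereal) \<Rightarrow> bool" where
  "proper_fun g \<longleftrightarrow> (\<forall>x. g x \<noteq> -\<infinity>) \<and> edom g \<noteq> {}"

definition ereal_convex :: "('a::real_vector \<Rightarrow> ereal) \<Rightarrow> bool" where
  "ereal_convex g \<longleftrightarrow> convex {(x, r::real). g x \<le> ereal r}"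

definition v1 :: "('a \<Rightarrow> ereal) \<Rightarrow> ('a \<Rightarrow> ereal) \<Rightarrow> real \<Rightarrow> ereal" where
  "v1 f h r = (INF x\<in>{x. h x \<le> ereal r}. f x)"

definition v1bar0 :: "('a \<Rightarrow> ereal) \<Rightarrow> ('a \<Rightarrow> ereal) \<Rightarrow> ereal" where
  "v1bar0 f h = min (v1 f h 0) (Liminf (at (0::real)) (v1 f h))"

definition supD1 :: "('a \<Rightarrow> ereal) \<Rightarrow> ('a \<Rightarrow> ereal) \<Rightarrow> ereal" where
  "supD1 f h = (SUP s\<in>{0::real..}. INF x\<in>edom f \<inter> edom h. f x + ereal s * h x)"

end

theory Submission
  imports Defs
begin

lemma conv_comb:
  fixes g :: "'a::real_vector \<Rightarrow> ereal"
  assumes "ereal_convex g" "g x \<le> ereal a" "g y \<le> ereal b" "0 \<le> u" "u \<le> 1"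
  shows "g (u *\<^sub>R x + (1-u) *\<^sub>R y) \<le> ereal (u*a + (1-u)*b)"
proof -
  let ?E = "{(x, r::real). g x \<le> ereal r}"
  have c: "convex ?E" using assms(1) unfolding ereal_convex_def .
  have "u *\<^sub>R (x,a) + (1-u) *\<^sub>R (y,b) \<in> ?E"
    by (rule convexD[OF c]) (use assms in auto)
  then show ?thesis by simp
qed

lemma eps_le:
  fixes A C e :: real
  assumes "e > 0" and h: "\<And>t. 0 < t \<Longrightarrow> t < e \<Longrightarrow> A \<le> t * C"
  shows "A \<le> 0"
proof (rule ccontr)
  assume A: "\<not> A \<le> 0"
  show False
  proof (cases "C \<le> 0")
    case True
    have "A \<le> (e/2) * C" using h[of "e/2"] assms by auto
    also have "\<dots> \<le> 0" using True assms by (simp add: mult_nonneg_nonpos)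
    finally show False using A by simp
  next
    case False
    define t where "t = min (e/2) (A/(2*C))"
    have t0: "0 < t" "t < e" using A False assms by (auto simp: t_def)
    have "t * C \<le> (A/(2*C)) * C" using False by (intro mult_right_mono) (auto simp: t_def)
    also have "\<dots> = A/2" using False by simp
    finally show False using h[OF t0] A by simp
  qed
qed

theorem proposition3p1:
  fixes f :: "'a::real_vector \<Rightarrow> ereal"
    and ft :: "'i \<Rightarrow> 'a \<Rightarrow> ereal"
    and T :: "'i set"
    and h :: "'a \<Rightarrow> ereal"
  assumes "infinite T"
    and "ereal_convex f" and "proper_fun f"
    and "\<And>t. t \<in> T \<Longrightarrow> ereal_convex (ft t) \<and> proper_fun (ft t)"
    and "h = (\<lambda>x. SUP t\<in>T. ft t x)"
    and "v1bar0 f h \<noteq> \<infinity> \<or> supD1 f h \<noteq> -\<infinity>"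
  shows "((\<lambda>\<epsilon>::real. INF x\<in>{x. \<forall>t\<in>T. ft t x \<le> ereal \<epsilon>}. f x) \<longlongrightarrow> supD1 f h)
           (at_right 0)"
proof -
  define V where "V = v1 f h"
  define D where "D = edom f \<inter> edom h"
  define L where "L = (SUP e\<in>{0::real<..}. V e)"
  from assms(1) have Tne: "T \<noteq> {}" by auto
  have hne: "h x \<noteq> -\<infinity>" for x
  proof -
    obtain t where t: "t \<in> T" using Tne by auto
    have "ft t x \<noteq> -\<infinity>" using assms(4)[OF t] unfolding proper_fun_def by auto
    moreover have "ft t x \<le> h x" unfolding assms(5) using t by (rule SUP_upper)
    ultimately show ?thesis by auto
  qed
  have fne: "f x \<noteq> -\<infinity>" for x using assms(3) unfolding proper_fun_def by auto
  have hconv: "h (u *\<^sub>R x + (1-u) *\<^sub>R y) \<le> ereal (u*a+(1-u)*b)"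
    if "h x \<le> ereal a" "h y \<le> ereal b" "0\<le>u" "u\<le>1" for x y a b u
    unfolding assms(5)
  proof (rule SUP_least)
    fix t assume t: "t \<in> T"
    have "ft t x \<le> h x" "ft t y \<le> h y" unfolding assms(5) using t by (auto intro: SUP_upper)
    then show "ft t (u *\<^sub>R x + (1-u) *\<^sub>R y) \<le> ereal (u*a+(1-u)*b)"
      using conv_comb[of "ft t" x a y b u] assms(4)[OF t] that by auto
  qed
  have fconv: "f (u *\<^sub>R x + (1-u) *\<^sub>R y) \<le> ereal (u*a+(1-u)*b)"
    if "f x \<le> ereal a" "f y \<le> ereal b" "0\<le>u" "u\<le>1" for x y a b u
    using conv_comb[of f x a y b u] assms(2) that by auto
  have Vlow: "V e \<le> f x" if "h x \<le> ereal e" for x e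
    unfolding V_def v1_def by (rule INF_lower) (use that in simp)
  have Vmono: "V e' \<le> V e" if "e \<le> e'" for e e'
    unfolding V_def v1_def by (rule INF_superset_mono) (use that in \<open>auto intro: order_trans\<close>)
  have VL: "V e \<le> L" if "0 < e" for e
    unfolding L_def by (rule SUP_upper) (use that in simp)
  have Lz: "L \<le> f z" if "h z \<le> ereal 0" for z
    unfolding L_def
  proof (rule SUP_least)
    fix e :: real assume "e \<in> {0<..}"
    then have "h z \<le> ereal e" using that by (auto intro: order_trans)
    then show "V e \<le> f z" by (rule Vlow)
  qed
  have lim: "(V \<longlongrightarrow> L) (at_right 0)"
    unfolding order_tendsto_iff
  proof safe
    fix l assume "l < L"
    then obtain e0 where e0: "e0 > 0" "l < V e0" unfolding L_def less_SUP_iff by auto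
    show "\<forall>\<^sub>F x in at_right 0. l < V x"
      unfolding eventually_at_right[OF e0(1)]
      using e0 Vmono by (auto intro!: exI[of _ e0] intro: less_le_trans)
  next
    fix u assume "L < u"
    show "\<forall>\<^sub>F x in at_right 0. V x < u"
      unfolding eventually_at_right[OF zero_less_one]
      using VL \<open>L < u\<close> by (auto intro!: exI[of _ 1] intro: le_less_trans)
  qed
  have eq: "(\<lambda>\<epsilon>::real. INF x\<in>{x. \<forall>t\<in>T. ft t x \<le> ereal \<epsilon>}. f x) = V"
    unfolding V_def v1_def assms(5) by (simp add: SUP_le_iff)
  have weak: "supD1 f h \<le> L"
    unfolding supD1_def D_def[symmetric]
  proof (rule SUP_least)
    fix s :: real assume "s \<in> {0..}"
    then have s0: "s \<ge> 0" by simp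
    define I where "I = (INF x\<in>D. f x + ereal s * h x)"
    have key: "I \<le> L + ereal (s*e)" if e0: "e > 0" for e
    proof -
      have "I - ereal (s*e) \<le> V e"
        unfolding V_def v1_def
      proof (rule INF_greatest)
        fix x assume "x \<in> {x. h x \<le> ereal e}"
        then have hx: "h x \<le> ereal e" by simp
        show "I - ereal (s*e) \<le> f x"
        proof (cases "f x = \<infinity>")
          case True then show ?thesis by simp
        next
          case False
          then obtain a where a: "f x = ereal a" using fne[of x] by (cases "f x") auto
          obtain r where r: "h x = ereal r" using hne[of x] hx by (cases "h x") auto
          have "x \<in> D" unfolding D_def edom_def using a r by simp
          then have "I \<le> f x + ereal s * h x" unfolding I_def by (rule INF_lower)
          also have "\<dots> = ereal (a + s*r)" using a r by simp
          also have "\<dots> \<le> ereal (a + s*e)" using hx r s0 by (simp add: mult_left_mono)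
          finally show ?thesis using a by (cases I) auto
        qed
      qed
      then have "I \<le> V e + ereal (s*e)" by (simp add: ereal_minus_le_iff add.commute)
      also have "\<dots> \<le> L + ereal (s*e)" using VL[OF e0] by (rule add_right_mono)
      finally show ?thesis .
    qed
    show "I \<le> L"
    proof (rule ereal_le_epsilon2)
      fix d :: real assume d: "d > 0"
      have "I \<le> L + ereal (s * (d/(s+1)))" using key[of "d/(s+1)"] d s0 by simp
      also have "\<dots> \<le> L + ereal d"
      proof (rule add_left_mono)
        have "s * (d/(s+1)) \<le> d" using s0 d by (simp add: field_simps)
        then show "ereal (s * (d/(s+1))) \<le> ereal d" by simp
      qed
      finally show "I \<le> L + ereal d" .
    qed
  qed
  have strong: "L \<le> supD1 f h"
  proof (cases L)
    case MInf then show ?thesis by simp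
  next
    case (real l)
    show ?thesis
    proof (rule ereal_le_epsilon2)
      fix d :: real assume d: "d > 0"
      have "ereal (l - d) < L" using real d by simp
      then obtain e where e: "e > 0" "ereal (l - d) < V e" unfolding L_def less_SUP_iff by auto
      have "V e \<le> ereal l" using VL[OF e(1)] real by simp
      then obtain w where w: "V e = ereal w" using e(2) by (cases "V e") auto
      have wl: "l - d < w" "w \<le> l" using e(2) w \<open>V e \<le> ereal l\<close> by auto
      define s where "s = (l - w)/e"
      have s0: "s \<ge> 0" using wl e by (simp add: s_def)
      have "ereal (l - d) \<le> (INF x\<in>D. f x + ereal s * h x)"
      proof (rule INF_greatest)
        fix x assume "x \<in> D"
        then obtain a r where a: "f x = ereal a" and r: "h x = ereal r"
          using fne[of x] hne[of x] unfolding D_def edom_def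
          by (cases "f x"; cases "h x") auto
        have "l - d \<le> a + s * r"
        proof -
          consider "r < 0" | "0 \<le> r" "r \<le> e" | "e < r" by linarith
          then show ?thesis
          proof cases
            case 1
            have key: "(e - r)*l - e*a + r*w \<le> 0"
            proof (rule eps_le[OF e(1)])
              fix t :: real assume t: "0 < t" "t < e"
              have "V e < ereal (w + t)" using w t by simp
              then obtain y where y: "h y \<le> ereal e" "f y < ereal (w + t)"
                unfolding V_def v1_def INF_less_iff by auto
              then obtain b where b: "f y = ereal b" using fne[of y] by (cases "f y") auto
              define u where "u = e/(e - r)"
              have u: "0 \<le> u" "u \<le> 1" using 1 e(1) by (auto simp: u_def)
              have "u*r + (1-u)*e = 0" using 1 e(1) by (simp add: u_def field_simps)
              then have "h (u *\<^sub>R x + (1-u) *\<^sub>R y) \<le> ereal 0"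
                using hconv[of x r y e u] r y(1) u by simp
              then have "L \<le> f (u *\<^sub>R x + (1-u) *\<^sub>R y)" by (rule Lz)
              also have "\<dots> \<le> ereal (u*a + (1-u)*b)" using fconv[of x a y b u] a b u by simp
              finally have "l \<le> u*a + (1-u)*b" using real by simp
              also have "\<dots> \<le> u*a + (1-u)*(w+t)" using b y(2) u by (intro add_left_mono mult_left_mono) auto
              finally have "l \<le> u*a + (1-u)*(w+t)" .
              then have "(e - r) * l \<le> (e - r) * (u*a + (1-u)*(w+t))"
                using 1 e(1) by (intro mult_left_mono) auto
              also have "\<dots> = ((e - r) * u)*a + ((e - r)*(1-u))*(w+t)" by (simp add: algebra_simps)
              also have "(e - r) * u = e" using 1 e(1) by (simp add: u_def)
              also have "(e - r) * (1 - u) = - r"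
              proof -
                have "(e - r) * u = e" using 1 e(1) by (simp add: u_def)
                then show ?thesis by (simp add: algebra_simps)
              qed
              finally show "(e - r)*l - e*a + r*w \<le> t * (- r)" using 1 by (simp add: algebra_simps)
            qed
            have "l \<le> a + s*r" using key e(1) by (simp add: s_def field_simps)
            then show ?thesis using d by simp
          next
            case 2
            have "ereal w \<le> ereal a" using Vlow[of x e] r 2 w a by simp
            then show ?thesis using wl 2 s0 by (simp add: add_increasing2)
          next
            case 3
            have key: "r*w - e*a - (r-e)*l \<le> 0"
            proof (rule eps_le[OF e(1)])
              fix t :: real assume t: "0 < t" "t < e"
              have "V t < ereal (l + t)" using VL[of t] t real by (simp add: le_less_trans)
              then obtain y where y: "h y \<le> ereal t" "f y < ereal (l + t)"
                unfolding V_def v1_def INF_less_iff by auto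
              then obtain b where b: "f y = ereal b" using fne[of y] by (cases "f y") auto
              define u where "u = (e - t)/(r - t)"
              have u: "0 \<le> u" "u \<le> 1" using 3 t by (auto simp: u_def)
              have "u*r + (1-u)*t = e"
              proof -
                have "(r - t) * u = e - t" using 3 t by (simp add: u_def)
                then show ?thesis by (simp add: algebra_simps)
              qed
              then have "h (u *\<^sub>R x + (1-u) *\<^sub>R y) \<le> ereal e"
                using hconv[of x r y t u] r y(1) u by simp
              then have "V e \<le> f (u *\<^sub>R x + (1-u) *\<^sub>R y)" by (rule Vlow)
              also have "\<dots> \<le> ereal (u*a + (1-u)*b)" using fconv[of x a y b u] a b u by simp
              finally have "w \<le> u*a + (1-u)*b" using w by simp
              also have "\<dots> \<le> u*a + (1-u)*(l+t)" using b y(2) u by (intro add_left_mono mult_left_mono) auto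
              finally have "w \<le> u*a + (1-u)*(l+t)" .
              then have "(r - t) * w \<le> (r - t) * (u*a + (1-u)*(l+t))"
                using 3 t by (intro mult_left_mono) auto
              also have "\<dots> = ((r - t) * u)*a + ((r - t)*(1-u))*(l+t)" by (simp add: algebra_simps)
              also have "(r - t) * u = e - t" using 3 t by (simp add: u_def)
              also have "(r - t) * (1 - u) = r - e"
              proof -
                have "(r - t) * u = e - t" using 3 t by (simp add: u_def)
                then show ?thesis by (simp add: algebra_simps)
              qed
              finally show "r*w - e*a - (r-e)*l \<le> t * (w - a + r - e)" by (simp add: algebra_simps)
            qed
            have "l \<le> a + s*r" using key e(1) by (simp add: s_def field_simps)
            then show ?thesis using d by simp
          qed
        qed
        then show "ereal (l - d) \<le> f x + ereal s * h x" using a r by simp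
      qed
      also have "\<dots> \<le> supD1 f h" unfolding supD1_def D_def
        by (rule SUP_upper2[of s]) (use s0 in auto)
      finally have "ereal (l - d) \<le> supD1 f h" .
      then have "ereal (l - d) + ereal d \<le> supD1 f h + ereal d" by (rule add_right_mono)
      then show "L \<le> supD1 f h + ereal d" using real by simp
    qed
  next
    case PInf
    have V0: "V 0 = \<infinity>"
    proof -
      have "L \<le> V 0" unfolding V_def v1_def by (rule INF_greatest) (auto intro: Lz)
      then show ?thesis using PInf by simp
    qed
    have LI: "Liminf (at (0::real)) V = \<infinity>"
    proof -
      have "\<infinity> \<le> Liminf (at (0::real)) V"
        unfolding le_Liminf_iff
      proof safe
        fix y :: ereal assume "y < \<infinity>"
        then have "y < L" using PInf by simp
        then obtain e0 where e0: "e0 > 0" "y < V e0" unfolding L_def less_SUP_iff by auto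
        show "\<forall>\<^sub>F x in at 0. y < V x"
          unfolding eventually_at
        proof (intro exI[of _ e0] conjI ballI impI)
          fix x :: real assume "x \<noteq> 0 \<and> dist x 0 < e0"
          then have "x \<le> e0" by (auto simp: dist_real_def)
          then show "y < V x" using Vmono[of x e0] e0 by auto
        qed (use e0 in auto)
      qed
      then show ?thesis by simp
    qed
    have "v1bar0 f h = \<infinity>" unfolding v1bar0_def V_def[symmetric] using V0 LI by simp
    then have sne: "supD1 f h \<noteq> -\<infinity>" using assms(6) by simp
    have "\<exists>s\<in>{0::real..}. (INF x\<in>D. f x + ereal s * h x) \<noteq> -\<infinity>"
    proof (rule ccontr)
      assume "\<not> ?thesis"
      then have "supD1 f h = (SUP s\<in>{0::real..}. -\<infinity>)" unfolding supD1_def D_def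
        by (intro SUP_cong) auto
      then show False using sne by simp
    qed
    then obtain s0 where s0: "s0 \<ge> 0" "(INF x\<in>D. f x + ereal s0 * h x) \<noteq> -\<infinity>" by auto
    obtain c :: real where c: "ereal c \<le> (INF x\<in>D. f x + ereal s0 * h x)"
      using s0(2) by (cases "(INF x\<in>D. f x + ereal s0 * h x)") (auto intro: that[of 0] that[of _])
    have "supD1 f h = \<infinity>"
    proof (rule ereal_top)
      fix M :: real
      have "ereal M < L" using PInf by simp
      then obtain e where e: "e > 0" "ereal M < V e" unfolding L_def less_SUP_iff by auto
      define s where "s = s0 + \<bar>M - c\<bar>/e"
      have ss: "s \<ge> 0" using s0 e by (simp add: s_def)
      have "ereal M \<le> (INF x\<in>D. f x + ereal s * h x)"
      proof (rule INF_greatest)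
        fix x assume xD: "x \<in> D"
        then obtain a r where a: "f x = ereal a" and r: "h x = ereal r"
          using fne[of x] hne[of x] unfolding D_def edom_def
          by (cases "f x"; cases "h x") auto
        have "M \<le> a + s * r"
        proof -
          consider "r \<le> 0" | "0 < r" "r \<le> e" | "e < r" by linarith
          then show ?thesis
          proof cases
            case 1
            then have "L \<le> f x" using r by (intro Lz) simp
            then show ?thesis using PInf a by simp
          next
            case 2
            have "V e \<le> f x" using Vlow[of x e] r 2 by simp
            then have "ereal M < ereal a" using e(2) a by (metis less_le_trans)
            then show ?thesis using ss 2 by (simp add: add_increasing2)
          next
            case 3
            have "ereal c \<le> f x + ereal s0 * h x" using c INF_lower[OF xD, of "\<lambda>x. f x + ereal s0 * h x"] by simp
            then have ca: "c \<le> a + s0 * r" using a r by simp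
            have "\<bar>M - c\<bar> \<le> \<bar>M - c\<bar>/e * r"
            proof -
              have "\<bar>M - c\<bar>/e * r = \<bar>M - c\<bar> * (r/e)" by simp
              also have "\<dots> \<ge> \<bar>M - c\<bar> * 1" using 3 e(1) by (intro mult_left_mono) auto
              finally show ?thesis by simp
            qed
            then show ?thesis using ca by (simp add: s_def algebra_simps)
          qed
        qed
        then show "ereal M \<le> f x + ereal s * h x" using a r by simp
      qed
      also have "\<dots> \<le> supD1 f h" unfolding supD1_def D_def
        by (rule SUP_upper2[of s]) (use ss in auto)
      finally show "ereal M \<le> supD1 f h" .
    qed
    then show ?thesis by simp
  qed
  show ?thesis using lim eq weak strong by simp
qed

end
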